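(* Let $G$ be a minimal graph in $\mathcal{H}_e(3,3)$. Then for every vertex $v$ of $G$ we have $\alpha(G(v))\le d(v)-3$.
   Context: All graphs are finite, simple and undirected. $\alpha(H)$ is the independence number of $H$, $d(v)$ is the degree of $v$, and $G(v)$ is the subgraph of $G$ induced by the set of neighbors of $v$. Write $G \overset{e}{\rightarrow}(3,3)$ if every coloring of the edges of $G$ with two colors contains a monochromatic triangle; $\mathcal{H}_e(3,3)$ is the class of such graphs. $G$ is a minimal graph in $\mathcal{H}_e(3,3)$ if $G \overset{e}{\rightarrow}(3,3)$ and no proper subgraph $H$ of $G$ satisfies $H \overset{e}{\rightarrow}(3,3)$. *)

theory Defs
  imports Main
begin

definition graph :: "'a set \<Rightarrow> 'a set set \<Rightarrow> bool" where
  "graph V E \<longleftrightarrow> finite V \<and> (\<forall>e\<in>E. e \<subseteq> V \<and> card e = 2)"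

definition subgraph :: "'a set \<Rightarrow> 'a set set \<Rightarrow> 'a set \<Rightarrow> 'a set set \<Rightarrow> bool" where
  "subgraph V' E' V E \<longleftrightarrow> graph V' E' \<and> V' \<subseteq> V \<and> E' \<subseteq> E"

definition proper_subgraph :: "'a set \<Rightarrow> 'a set set \<Rightarrow> 'a set \<Rightarrow> 'a set set \<Rightarrow> bool" where
  "proper_subgraph V' E' V E \<longleftrightarrow> subgraph V' E' V E \<and> (V', E') \<noteq> (V, E)"

definition triangle :: "'a set set \<Rightarrow> 'a \<Rightarrow> 'a \<Rightarrow> 'a \<Rightarrow> bool" where
  "triangle E x y z \<longleftrightarrow> {x, y} \<in> E \<and> {y, z} \<in> E \<and> {x, z} \<in> E"

definition arrows_e33 :: "'a set \<Rightarrow> 'a set set \<Rightarrow> bool" where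
  "arrows_e33 V E \<longleftrightarrow> (\<forall>col :: 'a set \<Rightarrow> bool. \<exists>x y z. triangle E x y z \<and>
      col {x, y} = col {y, z} \<and> col {y, z} = col {x, z})"

definition minimal_He33 :: "'a set \<Rightarrow> 'a set set \<Rightarrow> bool" where
  "minimal_He33 V E \<longleftrightarrow> graph V E \<and> arrows_e33 V E \<and>
     (\<forall>V' E'. proper_subgraph V' E' V E \<longrightarrow> \<not> arrows_e33 V' E')"

definition neighbors :: "'a set set \<Rightarrow> 'a \<Rightarrow> 'a set" where
  "neighbors E v = {u. {v, u} \<in> E}"

definition degree :: "'a set set \<Rightarrow> 'a \<Rightarrow> nat" where
  "degree E v = card (neighbors E v)"

text \<open>Independent set S in the graph with edges E; the induced subgraph on W has
  edges {e \<in> E. e \<subseteq> W}, so independence in G(v) is independence in G of a subset of N(v).\<close>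
definition independent :: "'a set set \<Rightarrow> 'a set \<Rightarrow> bool" where
  "independent E S \<longleftrightarrow> (\<forall>x\<in>S. \<forall>y\<in>S. {x, y} \<notin> E)"

definition induced_edges :: "'a set set \<Rightarrow> 'a set \<Rightarrow> 'a set set" where
  "induced_edges E W = {e \<in> E. e \<subseteq> W}"

definition indep_number :: "'a set \<Rightarrow> 'a set set \<Rightarrow> nat" where
  "indep_number W F = Max (card ` {S. S \<subseteq> W \<and> independent F S})"

end

theory Submission
  imports Defs
begin

theorem theorem8p6:
  fixes V :: "'a set" and E :: "'a set set"
  assumes "minimal_He33 V E"
    and "v \<in> V"
  shows "int (indep_number (neighbors E v) (induced_edges E (neighbors E v)))
           \<le> int (degree E v) - 3"
proof -
  define N where "N = neighbors E v"
  have gr: "graph V E" and ar: "arrows_e33 V E"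
    and mn: "\<And>V' E'. proper_subgraph V' E' V E \<Longrightarrow> \<not> arrows_e33 V' E'"
    using assms(1) unfolding minimal_He33_def by auto
  have finV: "finite V" and edg: "\<And>e. e \<in> E \<Longrightarrow> e \<subseteq> V \<and> card e = 2"
    using gr unfolding graph_def by auto
  have NV: "N \<subseteq> V" using edg unfolding N_def neighbors_def by auto
  have finN: "finite N" using NV finV finite_subset by blast
  have vN: "v \<notin> N"
  proof
    assume "v \<in> N"
    then have "{v} \<in> E" unfolding N_def neighbors_def by auto
    then show False using edg by fastforce
  qed
  define F where "F = {S. S \<subseteq> N \<and> independent (induced_edges E N) S}"
  have finF: "finite F" unfolding F_def using finN by auto
  have neF: "{} \<in> F" unfolding F_def independent_def by auto
  have "indep_number N (induced_edges E N) \<in> card ` F"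
    unfolding indep_number_def F_def[symmetric]
    using finF neF by (intro Max_in) auto
  then obtain S where SF: "S \<in> F" and Sc: "indep_number N (induced_edges E N) = card S" by auto
  have SN: "S \<subseteq> N" using SF unfolding F_def by auto
  have Sind: "\<And>x y. x \<in> S \<Longrightarrow> y \<in> S \<Longrightarrow> {x, y} \<notin> E"
  proof -
    fix x y assume "x \<in> S" "y \<in> S"
    then have "{x,y} \<notin> induced_edges E N" using SF unfolding F_def independent_def by auto
    moreover have "{x,y} \<subseteq> N" using \<open>x \<in> S\<close> \<open>y \<in> S\<close> SN by auto
    ultimately show "{x, y} \<notin> E" unfolding induced_edges_def by auto
  qed
  have "card S + 3 \<le> card N"
  proof (rule ccontr)
    assume "\<not> card S + 3 \<le> card N"
    define B where "B = N - S"
    have finB: "finite B" using finN B_def by auto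
    have cB: "card B \<le> 2" unfolding B_def using card_Diff_subset[OF finite_subset[OF SN finN] SN]
      \<open>\<not> card S + 3 \<le> card N\<close> by linarith
    define E' where "E' = {e \<in> E. v \<notin> e}"
    have "proper_subgraph (V - {v}) E' V E"
      unfolding proper_subgraph_def subgraph_def graph_def E'_def
      using finV edg assms(2) by auto
    then have "\<not> arrows_e33 (V - {v}) E'" by (rule mn)
    then obtain c :: "'a set \<Rightarrow> bool" where c: "\<And>x y z. triangle E' x y z \<Longrightarrow>
        \<not> (c {x, y} = c {y, z} \<and> c {y, z} = c {x, z})"
      unfolding arrows_e33_def by auto
    define r where "r = (\<not> c B)"
    define col where "col = (\<lambda>e. if v \<in> e then (if e - {v} \<subseteq> B then r else \<not> r) else c e)"
    have key: "col {v, a} \<noteq> col {v, b} \<or> col {v, a} \<noteq> col {a, b}"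
      if "{v, a} \<in> E" "{v, b} \<in> E" "{a, b} \<in> E" for a b
    proof -
      have aN: "a \<in> N" and bN: "b \<in> N" using that unfolding N_def neighbors_def by auto
      have av: "a \<noteq> v" and bv: "b \<noteq> v" using aN bN vN by auto
      have ab: "a \<noteq> b" using edg[OF that(3)] by (cases "a = b") auto
      have cab: "col {a, b} = c {a, b}" unfolding col_def using av bv by auto
      have ca: "col {v, a} = (if a \<in> B then r else \<not> r)" unfolding col_def using av by auto
      have cb: "col {v, b} = (if b \<in> B then r else \<not> r)" unfolding col_def using bv by auto
      show ?thesis
      proof (cases "a \<in> B \<and> b \<in> B")
        case True
        then have "{a, b} \<subseteq> B" by auto
        moreover have "card {a, b} = 2" using ab by auto
        ultimately have "{a, b} = B" using cB finB
          by (metis card_seteq)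
        then show ?thesis using ca cab True r_def by auto
      next
        case False
        have "\<not> (a \<in> S \<and> b \<in> S)" using Sind that(3) by auto
        then have "a \<in> B \<or> b \<in> B" using aN bN B_def by auto
        then show ?thesis using ca cb False by auto
      qed
    qed
    have "\<not> (triangle E x y z \<and> col {x, y} = col {y, z} \<and> col {y, z} = col {x, z})" for x y z
    proof
      assume h: "triangle E x y z \<and> col {x, y} = col {y, z} \<and> col {y, z} = col {x, z}"
      then have t: "{x, y} \<in> E" "{y, z} \<in> E" "{x, z} \<in> E" unfolding triangle_def by auto
      show False
      proof (cases "v = x")
        case True
        then show ?thesis using key[of y z] t h by auto
      next
        case nx: False
        show ?thesis
        proof (cases "v = y")
          case True
          then show ?thesis using key[of x z] t h by (auto simp: insert_commute)
        next
          case ny: False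
          show ?thesis
          proof (cases "v = z")
            case True
            then show ?thesis using key[of x y] t h by (auto simp: insert_commute)
          next
            case False
            then have "triangle E' x y z" using t nx ny unfolding triangle_def E'_def by auto
            moreover have "col {x,y} = c {x,y}" "col {y,z} = c {y,z}" "col {x,z} = c {x,z}"
              unfolding col_def using nx ny False by auto
            ultimately show False using c h by metis
          qed
        qed
      qed
    qed
    then have "\<not> arrows_e33 V E" unfolding arrows_e33_def by blast
    then show False using ar by simp
  qed
  then show ?thesis unfolding degree_def N_def[symmetric] using Sc by simp
qed

end
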